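(* The set $\{\psi(n)/V(n) : n\ge1\}$ is dense in the interval $(1,+\infty)$; that is, every nonempty open subinterval of $(1,+\infty)$ contains an element of this set.
   Context: For a positive integer $n$, an integer $a$ is called regular modulo $n$ if there exists an integer $x$ with $a^2x\equiv a \pmod n$. Let $V(n)$ denote the number of integers $a$ with $1\le a\le n$ that are regular modulo $n$. (Known fact: $V$ is multiplicative, $V(1)=1$, and $V(p^{\alpha})=p^{\alpha}-p^{\alpha-1}+1$ for a prime $p$ and $\alpha\ge1$.) $\psi$ denotes the Dedekind function, $\psi(n)=n\prod_{p\mid n}(1+1/p)$, the product over primes $p$ dividing $n$. *)

theory Defs
  imports "HOL-Computational_Algebra.Primes" "HOL-Number_Theory.Cong" Complex_Main
begin

definition regular_mod :: "nat \<Rightarrow> int \<Rightarrow> bool" where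
  "regular_mod n a \<longleftrightarrow> (\<exists>x::int. [a^2 * x = a] (mod int n))"

definition V :: "nat \<Rightarrow> nat" where
  "V n = card {a::int. 1 \<le> a \<and> a \<le> int n \<and> regular_mod n a}"

definition dedekind_psi :: "nat \<Rightarrow> real" where
  "dedekind_psi n = real n * (\<Prod>p\<in>prime_factors n. (1 + 1 / real p))"

end

theory Submission imports Defs "HOL-Number_Theory.Number_Theory" "HOL-Analysis.Harmonic_Numbers" begin

lemma mult_le_self:
  assumes "prime (p::nat)" "n > 0"
  shows "multiplicity p n \<le> n"
proof -
  have "p ^ multiplicity p n dvd n" by (rule multiplicity_dvd)
  hence "p ^ multiplicity p n \<le> n" using assms(2) by (rule dvd_imp_le)
  moreover have "multiplicity p n < 2 ^ multiplicity p n" by (rule less_exp)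
  moreover have "(2::nat) ^ multiplicity p n \<le> p ^ multiplicity p n"
    using prime_ge_2_nat[OF assms(1)] by (simp add: power_mono)
  ultimately show ?thesis by linarith
qed

lemma n_prod_mult:
  assumes "finite P" "\<forall>p\<in>P. prime p" "\<And>p. prime p \<Longrightarrow> p dvd n \<Longrightarrow> p \<in> P" "(n::nat) > 0"
  shows "(\<Prod>p\<in>P. p ^ multiplicity p n) = n"
proof -
  have sub: "prime_factors n \<subseteq> P" using assms(3) by (auto simp: prime_factors_dvd)
  have "(\<Prod>p\<in>P. p ^ multiplicity p n) = (\<Prod>p\<in>prime_factors n. p ^ multiplicity p n)"
  proof (rule prod.mono_neutral_right[OF assms(1) sub])
    show "\<forall>i\<in>P - prime_factors n. i ^ multiplicity i n = 1"
      using assms(2,4) by (auto simp: prime_factors_multiplicity)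
  qed
  also have "\<dots> = n" using assms(4) by (simp add: prod_prime_factors)
  finally show ?thesis .
qed

lemma geo_bound:
  assumes "prime (p::nat)"
  shows "(\<Sum>k\<in>{..N}. (1 / real p) ^ k) \<le> (1 + 1 / real p) ^ 2"
proof -
  define x where "x = 1 / real p"
  have p2: "real p \<ge> 2" using prime_ge_2_nat[OF assms] by simp
  have x0: "0 < x" "x \<le> 1/2" using p2 by (auto simp: x_def field_simps)
  have "(\<Sum>k\<in>{..N}. x ^ k) = (\<Sum>k<Suc N. x ^ k)" by (simp add: lessThan_Suc_atMost)
  also have "\<dots> = (1 - x ^ Suc N) / (1 - x)" by (subst sum_gp_strict) (use x0 in simp)
  also have "\<dots> \<le> 1 / (1 - x)" using x0 by (intro divide_right_mono) auto
  also have "\<dots> \<le> (1 + x) ^ 2"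
  proof -
    have "1 \<le> (1 + x) ^ 2 * (1 - x)"
    proof -
      have "(1 + x) ^ 2 * (1 - x) = 1 + x * (1 - x - x * x)" by (simp add: algebra_simps power2_eq_square)
      moreover have "1 - x - x * x \<ge> 0" proof -
        have "x * x \<le> x * (1/2)" using x0 by (intro mult_left_mono) auto
        thus ?thesis using x0 by linarith
      qed
      ultimately show ?thesis using x0 by simp
    qed
    thus ?thesis using x0 by (simp add: field_simps)
  qed
  finally show ?thesis by (simp add: x_def)
qed

lemma harm_bound:
  "harm N \<le> (\<Prod>p\<in>{p. prime p \<and> p \<le> N}. (1 + 1 / real p) ^ 2)"
proof -
  define P where "P = {p. prime p \<and> p \<le> N}"
  have finP: "finite P" by (simp add: P_def)
  have Pp: "\<forall>p\<in>P. prime p" by (simp add: P_def)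
  define F where "F = (\<lambda>n. restrict (\<lambda>p. multiplicity p n) P)"
  have "harm N = (\<Sum>n\<in>{1..N}. inverse (real n))" by (simp add: harm_def)
  also have "\<dots> = (\<Sum>n\<in>{1..N}. \<Prod>p\<in>P. (1 / real p) ^ F n p)"
  proof (rule sum.cong[OF refl])
    fix n assume n: "n \<in> {1..N}"
    have h: "real n = real (\<Prod>p\<in>P. p ^ multiplicity p n)"
      using n by (subst n_prod_mult[OF finP Pp]) (auto simp: P_def dest: dvd_imp_le)
    have "inverse (real n) = (\<Prod>p\<in>P. (1 / real p) ^ multiplicity p n)"
    proof -
      have "(\<Prod>p\<in>P. (1 / real p) ^ multiplicity p n) = (\<Prod>p\<in>P. 1 / real p ^ multiplicity p n)"
        by (simp add: power_one_over)
      also have "\<dots> = 1 / (\<Prod>p\<in>P. real p ^ multiplicity p n)"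
        by (simp add: prod_dividef)
      finally show ?thesis using h by (simp add: inverse_eq_divide)
    qed
    thus "inverse (real n) = (\<Prod>p\<in>P. (1 / real p) ^ F n p)"
      by (simp add: F_def)
  qed
  also have "\<dots> = (\<Sum>g\<in>F ` {1..N}. \<Prod>p\<in>P. (1 / real p) ^ g p)"
  proof (rule sum.reindex[symmetric, unfolded comp_def])
    show "inj_on F {1..N}"
    proof
      fix m n assume m: "m \<in> {1..N}" and n: "n \<in> {1..N}" and eq: "F m = F n"
      have "m = (\<Prod>p\<in>P. p ^ multiplicity p m)"
        using m by (subst n_prod_mult[OF finP Pp]) (auto simp: P_def dest: dvd_imp_le)
      also have "\<dots> = (\<Prod>p\<in>P. p ^ multiplicity p n)"
      proof (rule prod.cong[OF refl])
        fix p assume "p \<in> P"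
        with eq have "F m p = F n p" by simp
        with \<open>p \<in> P\<close> show "p ^ multiplicity p m = p ^ multiplicity p n" by (simp add: F_def)
      qed
      also have "\<dots> = n"
        using n by (subst n_prod_mult[OF finP Pp]) (auto simp: P_def dest: dvd_imp_le)
      finally show "m = n" .
    qed
  qed
  also have "\<dots> \<le> (\<Sum>g\<in>PiE P (\<lambda>_. {..N}). \<Prod>p\<in>P. (1 / real p) ^ g p)"
  proof (rule sum_mono2)
    show "finite (PiE P (\<lambda>_. {..N}))" using finP by (simp add: finite_PiE)
    show "F ` {1..N} \<subseteq> PiE P (\<lambda>_. {..N})"
    proof
      fix g assume "g \<in> F ` {1..N}"
      then obtain n where n: "n \<in> {1..N}" "g = F n" by auto
      have "\<forall>p\<in>P. multiplicity p n \<le> N"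
      proof
        fix p assume "p \<in> P"
        hence "prime p" by (simp add: P_def)
        from mult_le_self[OF this, of n] n show "multiplicity p n \<le> N" by simp
      qed
      thus "g \<in> PiE P (\<lambda>_. {..N})" using n by (auto simp: F_def)
    qed
    show "\<And>b. b \<in> PiE P (\<lambda>_. {..N}) - F ` {1..N} \<Longrightarrow> 0 \<le> (\<Prod>p\<in>P. (1 / real p) ^ b p)"
      by (intro prod_nonneg) auto
  qed
  also have "\<dots> = (\<Prod>p\<in>P. \<Sum>k\<in>{..N}. (1 / real p) ^ k)"
    by (rule prod_sum_PiE[symmetric]) (use finP in auto)
  also have "\<dots> \<le> (\<Prod>p\<in>P. (1 + 1 / real p) ^ 2)"
    by (intro prod_mono conjI sum_nonneg geo_bound) (auto simp: P_def)
  finally show ?thesis by (simp add: P_def)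
qed


lemma cong_prod_primes:
  assumes "finite S" "\<forall>p\<in>S. prime (p::nat)" "\<forall>p\<in>S. [x = y] (mod p)"
  shows "[x = y] (mod \<Prod>S)"
  using assms
proof (induction S rule: finite_induct)
  case empty thus ?case by simp
next
  case (insert p S)
  have "\<not> p dvd \<Prod>S"
  proof
    assume "p dvd \<Prod>S"
    then obtain q where "q \<in> S" "p dvd q"
      using insert by (auto simp: prime_dvd_prod_iff)
    hence "p = q" using insert by (auto intro: primes_dvd_imp_eq)
    thus False using \<open>q \<in> S\<close> insert by simp
  qed
  hence "coprime p (\<Prod>S)" using insert by (intro prime_imp_coprime) auto
  moreover have "[x = y] (mod \<Prod>S)" using insert by simp
  moreover have "[x = y] (mod p)" using insert by simp
  ultimately show ?case using insert by (simp add: coprime_cong_mult_nat)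
qed

lemma regular_prod:
  assumes "finite S" "\<forall>p\<in>S. prime (p::nat)"
  shows "regular_mod (\<Prod>S) (int a)"
proof -
  define k where "k = (\<Prod>p\<in>S. p - 1)"
  have k1: "k \<ge> 1" unfolding k_def
  proof (intro prod_ge_1)
    fix p assume "p \<in> S"
    hence "p \<ge> 2" using assms prime_ge_2_nat by blast
    thus "1 \<le> p - 1" by simp
  qed
  have "\<forall>p\<in>S. [a ^ (k + 1) = a] (mod p)"
  proof
    fix p assume pS: "p \<in> S"
    hence pp: "prime p" using assms by auto
    show "[a ^ (k + 1) = a] (mod p)"
    proof (cases "p dvd a")
      case True
      hence "[a = 0] (mod p)" by (simp add: cong_0_iff)
      moreover have "[a ^ (k+1) = 0] (mod p)" using True by (simp add: cong_0_iff)
      ultimately show ?thesis using cong_trans cong_sym by blast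
    next
      case False
      have f: "[a ^ (p - 1) = 1] (mod p)" by (rule fermat_theorem[OF pp False])
      have "(p - 1) dvd k" unfolding k_def by (rule dvd_prodI[OF assms(1) pS])
      then obtain j where j: "k = (p - 1) * j" by (auto elim: dvdE)
      have "[a ^ k = 1] (mod p)" unfolding j power_mult
        using cong_pow[OF f, of j] by simp
      hence "[a ^ k * a = 1 * a] (mod p)" by (rule cong_mult) simp
      thus ?thesis by (simp add: mult.commute)
    qed
  qed
  hence c: "[a ^ (k + 1) = a] (mod \<Prod>S)" by (rule cong_prod_primes[OF assms])
  have "k + 1 = 2 + (k - 1)" using k1 by simp
  hence "a ^ (k + 1) = a ^ 2 * a ^ (k - 1)" by (simp only: power_add)
  with c have c': "[a ^ 2 * a ^ (k - 1) = a] (mod \<Prod>S)" by simp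
  hence "[int (a ^ 2 * a ^ (k - 1)) = int a] (mod int (\<Prod>S))" by (simp only: cong_int_iff)
  hence "[int a ^ 2 * int a ^ (k - 1) = int a] (mod int (\<Prod>S))" by (simp only: of_nat_mult of_nat_power)
  thus ?thesis unfolding regular_mod_def by blast
qed

lemma V_prod:
  assumes "finite S" "\<forall>p\<in>S. prime (p::nat)"
  shows "V (\<Prod>S) = \<Prod>S"
proof -
  have "{a::int. 1 \<le> a \<and> a \<le> int (\<Prod>S) \<and> regular_mod (\<Prod>S) a} = {1..int (\<Prod>S)}"
  proof safe
    fix a :: int assume "a \<in> {1..int (\<Prod>S)}"
    hence "a = int (nat a)" by simp
    thus "regular_mod (\<Prod>S) a" using regular_prod[OF assms, of "nat a"] by metis
  qed auto
  thus ?thesis unfolding V_def by (simp del: of_nat_prod)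
qed

lemma prime_factors_prod_primes:
  assumes "finite S" "\<forall>p\<in>S. prime (p::nat)"
  shows "prime_factors (\<Prod>S) = S"
proof -
  have "prime_factors (prod id S) = \<Union>((prime_factors \<circ> id) ` S)"
    using assms by (intro prime_factors_prod) auto
  also have "\<dots> = S" using assms by (auto simp: prime_prime_factors)
  finally show ?thesis by simp
qed

lemma ratio_prod:
  assumes "finite S" "\<forall>p\<in>S. prime (p::nat)"
  shows "dedekind_psi (\<Prod>S) / real (V (\<Prod>S)) = (\<Prod>p\<in>S. 1 + 1 / real p)"
proof -
  have "\<Prod>S > 0" using assms by (auto intro!: prod_pos dest: prime_gt_0_nat)
  moreover have "0 \<notin> S" using assms by auto
  ultimately show ?thesis using assms
    by (simp add: V_prod dedekind_psi_def prime_factors_prod_primes)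
qed


lemma prod_mono_set_ge1:
  assumes "finite B" "A \<subseteq> B" "\<And>x. x \<in> B \<Longrightarrow> (1::real) \<le> f x"
  shows "prod f A \<le> prod f B"
proof -
  have "prod f B = prod f (B - A) * prod f A" using assms by (intro prod.subset_diff) auto
  moreover have "prod f (B - A) \<ge> 1" using assms by (intro prod_ge_1) auto
  moreover have "prod f A \<ge> 0"
  proof (intro prod_nonneg)
    fix x assume "x \<in> A"
    hence "1 \<le> f x" using assms by auto
    thus "0 \<le> f x" by linarith
  qed
  ultimately show ?thesis using mult_left_mono[of 1 "prod f (B - A)" "prod f A"] by (simp add: mult.commute)
qed

theorem proposition4:
  fixes a b :: real
  assumes "1 \<le> a" and "a < b"
  shows "\<exists>n::nat. n \<ge> 1 \<and> a < dedekind_psi n / real (V n) \<and> dedekind_psi n / real (V n) < b"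
proof -
  define P0 :: nat where "P0 = nat \<lceil>a / (b - a)\<rceil> + 1"
  have P0ge: "real P0 > a / (b - a)" unfolding P0_def by linarith
  have P01: "P0 \<ge> 1" unfolding P0_def by simp
  have "a < real P0 * (b - a)" using P0ge assms by (simp add: divide_less_eq)
  hence aP0: "a / real P0 < b - a"
    using P01 by (simp add: divide_less_eq mult.commute)
  define f :: "nat \<Rightarrow> real" where "f = (\<lambda>p. 1 + 1 / real p)"
  have f1: "f p \<ge> 1" for p by (simp add: f_def)
  define A where "A = {p. prime p \<and> p \<le> P0}"
  define Q where "Q = (\<lambda>m. {p. prime p \<and> P0 < p \<and> p \<le> m})"
  define g where "g = (\<lambda>m. prod f (Q m))"
  define C where "C = prod f A"
  have C1: "C \<ge> 1" unfolding C_def using f1 by (intro prod_ge_1) auto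
  have "\<forall>\<^sub>F n in sequentially. (b * C)^2 \<le> harm n"
    using harm_at_top by (simp add: filterlim_at_top)
  then obtain N where N: "(b * C)^2 \<le> harm N" by (auto simp: eventually_sequentially)
  define R where "R = {p. prime p \<and> p \<le> N}"
  have "harm N \<le> (\<Prod>p\<in>R. (f p) ^ 2)" unfolding R_def f_def by (rule harm_bound)
  also have "\<dots> = (prod f R) ^ 2" by (simp add: prod_power_distrib)
  finally have "(b * C)^2 \<le> (prod f R) ^ 2" using N by linarith
  moreover have "prod f R \<ge> 0" using f1 by (intro prod_nonneg) (auto intro: order.trans[of 0 1])
  ultimately have bC: "b * C \<le> prod f R" by (rule power2_le_imp_le)
  have finA: "finite A" "finite (Q m)" for m by (auto simp: A_def Q_def)
  have "prod f R \<le> prod f (A \<union> Q N)"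
  proof (rule prod_mono_set_ge1)
    show "finite (A \<union> Q N)" using finA by simp
    show "R \<subseteq> A \<union> Q N" unfolding R_def A_def Q_def by auto
    show "1 \<le> f x" for x by (rule f1)
  qed
  also have "\<dots> = C * g N"
    unfolding C_def g_def
  proof (rule prod.union_disjoint)
    show "A \<inter> Q N = {}" unfolding A_def Q_def by auto
  qed (use finA in auto)
  finally have "b * C \<le> C * g N" using bC by linarith
  hence gN: "b \<le> g N" using C1 by (simp add: mult.commute)
  hence ex: "\<exists>m. a < g m" using assms by (intro exI[of _ N]) linarith
  define m where "m = (LEAST m. a < g m)"
  have gm: "a < g m" unfolding m_def using ex by (rule LeastI_ex)
  have below: "g m' \<le> a" if "m' < m" for m'
  proof -
    have "\<not> a < g m'" using that unfolding m_def by (rule not_less_Least)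
    thus ?thesis by simp
  qed
  have "Q 0 = {}" by (auto simp: Q_def)
  hence "g 0 = 1" by (simp add: g_def)
  have "m \<noteq> 0"
  proof
    assume "m = 0"
    with gm \<open>g 0 = 1\<close> assms show False by simp
  qed
  then obtain m' where m': "m = Suc m'" by (cases m) auto
  have gm': "g m' \<le> a" using below m' by simp
  have gmb: "g m < b"
  proof (cases "prime m \<and> P0 < m")
    case True
    have "Q m = insert m (Q m')" using True m' by (auto simp: Q_def)
    moreover have "m \<notin> Q m'" using m' by (auto simp: Q_def)
    ultimately have "g m = f m * g m'" unfolding g_def using finA by simp
    also have "\<dots> \<le> f m * a" using gm' by (intro mult_left_mono) (auto simp: f_def)
    also have "\<dots> = a + a / real m" by (simp add: f_def field_simps)
    also have "\<dots> < b"
    proof -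
      have "a / real m \<le> a / real P0"
        using True P01 assms by (intro divide_left_mono) auto
      thus ?thesis using aP0 by linarith
    qed
    finally show ?thesis .
  next
    case False
    hence "Q m = Q m'" using m' by (auto simp: Q_def le_Suc_eq)
    hence "g m = g m'" by (simp add: g_def)
    thus ?thesis using gm' gm by linarith
  qed
  have primes: "\<forall>p\<in>Q m. prime p" by (simp add: Q_def)
  have rat: "dedekind_psi (\<Prod>(Q m)) / real (V (\<Prod>(Q m))) = g m"
    unfolding g_def f_def by (rule ratio_prod[OF finA(2) primes])
  have "\<Prod>(Q m) > 0" using primes finA(2) by (auto intro!: prod_pos dest: prime_gt_0_nat)
  hence "\<Prod>(Q m) \<ge> 1" by simp
  thus ?thesis using rat gm gmb by (intro exI[of _ "\<Prod>(Q m)"] conjI) simp_all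
qed

end
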